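(* Let $s\ge 2$ and $p\ge 2$ be integers and define \[G_{s,p}(x)=\frac{x(x^s-1)^p-(x^s-x)^p}{x(x-1)^p},\] which is a polynomial in $\mathbb{Z}[x]$. Then $G_{s,2}(x)$ divides $G_{s,p}(x)$ if and only if $p\equiv 2 \pmod{2(2s-1)}$.
   Context: $G_{s,p}(x)$ is (after the substitution $x=1-q$) the non-linear factor of the chromatic polynomial of the theta-graph $\Theta^{s,p}$, the graph on $2+p(s-1)$ vertices obtained from $p$ disjoint paths of length $s$ by identifying all their left-hand endpoints and all their right-hand endpoints. *)

theory Defs
  imports "HOL-Computational_Algebra.Polynomial"
begin

definition G_num :: "nat \<Rightarrow> nat \<Rightarrow> int poly" where
  "G_num s p = [:0, 1:] * ([:0, 1:] ^ s - 1) ^ p - ([:0, 1:] ^ s - [:0, 1:]) ^ p"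

definition G_den :: "nat \<Rightarrow> int poly" where
  "G_den p = [:0, 1:] * ([:0, 1:] - 1) ^ p"

text \<open>G_{s,p} = numerator / denominator (the division is exact in Z[x]).\<close>
definition G :: "nat \<Rightarrow> nat \<Rightarrow> int poly" where
  "G s p = G_num s p div G_den p"

end

theory Submission
  imports Defs "HOL-Analysis.Analysis"
begin

lemma mp_mult: "map_poly (of_int :: int \<Rightarrow> 'a::comm_ring_1) (p * q) = map_poly of_int p * map_poly of_int q"
  by (rule poly_eqI) (simp add: coeff_map_poly coeff_mult)
lemma mp_add: "map_poly (of_int :: int \<Rightarrow> 'a::comm_ring_1) (p + q) = map_poly of_int p + map_poly of_int q"
  by (rule poly_eqI) (simp add: coeff_map_poly)
lemma mp_diff: "map_poly (of_int :: int \<Rightarrow> 'a::comm_ring_1) (p - q) = map_poly of_int p - map_poly of_int q"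
  by (rule poly_eqI) (simp add: coeff_map_poly)
lemma mp_one: "map_poly (of_int :: int \<Rightarrow> 'a::comm_ring_1) 1 = 1"
  by simp
lemma mp_X: "map_poly (of_int :: int \<Rightarrow> 'a::comm_ring_1) [:0,1:] = [:0,1:]"
  by (rule poly_eqI) (simp add: coeff_map_poly coeff_pCons split: nat.split)
lemma mp_power: "map_poly (of_int :: int \<Rightarrow> 'a::comm_ring_1) (p ^ k) = map_poly of_int p ^ k"
  by (induction k) (simp_all add: mp_mult)

lemma rootiff:
  assumes "n \<ge> 1"
  shows "(exp(2 * of_real pi * \<i> * of_nat 1 / of_nat n) :: complex) ^ j = 1 \<longleftrightarrow> n dvd j"
proof -
  have "(exp(2 * of_real pi * \<i> * of_nat 1 / of_nat n) :: complex) ^ j = exp(2 * of_real pi * \<i> * of_nat j / of_nat n)"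
    by (simp add: exp_of_nat_mult[symmetric] algebra_simps)
  then show ?thesis using complex_root_unity_eq_1[OF assms, of j] by simp
qed

theorem proposition5:
  fixes s p :: nat
  assumes "s \<ge> 2" and "p \<ge> 2"
  shows "G s 2 dvd G s p \<longleftrightarrow> p mod (2 * (2 * s - 1)) = 2 mod (2 * (2 * s - 1))"
proof -
  define X :: "int poly" where "X = [:0,1:]"
  define t where "t = s - 1"
  define n where "n = 2*t+1"
  have s: "s = Suc t" and t1: "t \<ge> 1" using assms by (auto simp: t_def)
  have n2: "2 * (2 * s - 1) = 2*n" using s n_def by simp
  have ns: "n = s + t" using s n_def by simp
  define A where "A = (\<Sum>i<s. X^i)"
  define B where "B = (\<Sum>i<t. X^i)"
  define Phi where "Phi = (\<Sum>i<n. X^i)"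
  have hA: "X^s - 1 = (X - 1) * A" unfolding A_def by (rule power_diff_1_eq)
  have hB: "X^t - 1 = (X - 1) * B" unfolding B_def by (rule power_diff_1_eq)
  have hP: "X^n - 1 = (X - 1) * Phi" unfolding Phi_def by (rule power_diff_1_eq)
  have X1: "X - 1 \<noteq> 0"
  proof
    assume "X - 1 = 0"
    then have "coeff (X - 1) 1 = 0" by simp
    then show False by (simp add: X_def)
  qed
  have X0: "X \<noteq> 0" by (simp add: X_def)
  have Gform: "G s q = A^q - X^(q-1) * B^q" if q1: "q \<ge> 1" for q
  proof -
    obtain r where q: "q = Suc r" using q1 by (cases q) simp_all
    have "G_num s q = X*(X^s-1)^q - (X^s - X)^q" by (simp add: G_num_def X_def)
    also have "X^s - X = X * (X^t - 1)" using s by (simp add: algebra_simps)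
    also have "X*(X^s-1)^q - (X * (X^t - 1))^q = (X * (X-1)^q) * (A^q - X^(q-1) * B^q)"
      unfolding hA hB q power_mult_distrib by (simp add: algebra_simps)
    finally have num: "G_num s q = (X * (X-1)^q) * (A^q - X^(q-1) * B^q)" .
    have den: "G_den q = X * (X-1)^q" by (simp add: G_den_def X_def)
    have "X * (X-1)^q \<noteq> 0" using X0 X1 by simp
    then show ?thesis unfolding G_def num den by simp
  qed
  have Phi_split: "Phi = A + X^s * B"
  proof -
    have "(X - 1) * Phi = (X - 1) * (A + X^s * B)"
    proof -
      have "(X - 1) * Phi = X^n - 1" using hP by simp
      also have "\<dots> = (X^s - 1) + X^s * (X^t - 1)" unfolding ns by (simp add: power_add algebra_simps)
      also have "\<dots> = (X - 1) * (A + X^s * B)" unfolding hA hB by (simp add: algebra_simps)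
      finally show ?thesis .
    qed
    then show ?thesis using X1 by simp
  qed
  have G2: "G s 2 = Phi"
  proof -
    have "(X-1)^2 * G s 2 = (X-1)^2 * Phi"
    proof -
      have g2: "G s 2 = A^2 - X * B^2" using Gform[of 2] by simp
      have "(X-1)^2 * G s 2 = ((X - 1) * A)^2 - X * ((X - 1) * B)^2"
        unfolding g2 by (simp add: power2_eq_square algebra_simps)
      also have "\<dots> = (X * X^t - 1)^2 - X * (X^t - 1)^2" unfolding hA[symmetric] hB[symmetric] s by simp
      also have "\<dots> = (X - 1) * (X * (X^t)^2 - 1)" by (simp add: power2_eq_square algebra_simps)
      also have "X * (X^t)^2 - 1 = X^n - 1" unfolding n_def by (simp add: power_mult power_add algebra_simps)
      also have "(X - 1) * (X^n - 1) = (X-1)^2 * Phi" unfolding hP by (simp add: power2_eq_square)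
      finally show ?thesis .
    qed
    then show ?thesis using X1 by simp
  qed
  have key: "\<exists>S. X^(s*q) * G s q = X^(s*q) * A^q - X^(q-1) * (-A)^q - X^(q-1) * (Phi * S)" if q1: "q \<ge> 1" for q
  proof -
    define S where "S = (\<Sum>i<q. (-A)^(q - Suc i) * (Phi - A)^i)"
    have "(Phi - A)^q - (-A)^q = (Phi - A - (-A)) * S"
      unfolding S_def by (rule power_diff_sumr2)
    then have S: "(Phi - A)^q = (-A)^q + Phi * S" by (simp add: eq_diff_eq)
    have pp: "(X^s*B)^q = X^(s*q) * B^q" by (simp add: power_mult_distrib power_mult)
    have "X^(s*q) * G s q = X^(s*q) * A^q - X^(q-1) * (X^s * B)^q"
      unfolding Gform[OF q1] pp by (simp add: right_diff_distrib mult.left_commute)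
    also have "X^s * B = Phi - A" using Phi_split by simp
    also have "X^(s*q) * A^q - X^(q-1) * (Phi - A)^q = X^(s*q) * A^q - X^(q-1) * (-A)^q - X^(q-1) * (Phi * S)"
      unfolding S by (simp add: distrib_left)
    finally show ?thesis by blast
  qed
  have PhiXn: "Phi dvd X^n - 1" using hP by simp
  show ?thesis unfolding G2 n2
  proof
    assume dv: "Phi dvd G s p"
    define w :: complex where "w = exp(2 * of_real pi * \<i> * of_nat 1 / of_nat n)"
    have n1: "n \<ge> 1" using n_def by simp
    have wp: "w^j = 1 \<longleftrightarrow> n dvd j" for j unfolding w_def by (rule rootiff[OF n1])
    define e where "e P = poly (map_poly (of_int :: int \<Rightarrow> complex) P) w" for P
    have e_mult: "e (P * Q) = e P * e Q" for P Q by (simp add: e_def mp_mult)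
    have e_add: "e (P + Q) = e P + e Q" for P Q by (simp add: e_def mp_add)
    have e_diff: "e (P - Q) = e P - e Q" for P Q by (simp add: e_def mp_diff)
    have e_pow: "e (P ^ k) = e P ^ k" for P k by (simp add: e_def mp_power)
    have e_one: "e 1 = 1" by (simp add: e_def)
    have e_X: "e X = w" by (simp add: e_def X_def mp_X)
    have e_uminus: "e (- P) = - e P" for P using e_diff[of 0 P] by (simp add: e_def)
    have w1: "w \<noteq> 1" using wp[of 1] t1 n_def by auto
    have w0: "w \<noteq> 0" unfolding w_def by simp
    have wn: "w^n = 1" using wp by simp
    have "(w - 1) * e Phi = w^n - 1" using arg_cong[OF hP, of e] by (simp add: e_mult e_diff e_pow e_one e_X)
    then have ePhi: "e Phi = 0" using w1 wn by simp
    have eG: "e (G s p) = 0" using dv ePhi by (auto simp: dvd_def e_mult)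
    have "(w - 1) * e A = w^s - 1" using arg_cong[OF hA, of e] by (simp add: e_mult e_diff e_pow e_one e_X)
    moreover have "w^s \<noteq> 1"
    proof
      assume "w^s = 1"
      then have "n dvd s" using wp by simp
      then have "n \<le> s" using s by (simp add: dvd_imp_le)
      then show False using n_def s t1 by simp
    qed
    ultimately have eA: "e A \<noteq> 0" by auto
    obtain S where S: "X^(s*p) * G s p = X^(s*p) * A^p - X^(p-1) * (-A)^p - X^(p-1) * (Phi * S)"
      using key[of p] assms by auto
    have "e (X^(s*p) * G s p) = e (X^(s*p) * A^p - X^(p-1) * (-A)^p - X^(p-1) * (Phi * S))"
      using S by (rule arg_cong)
    then have "w^(s*p) * 0 = w^(s*p) * e A ^ p - w^(p-1) * (- e A)^p - w^(p-1) * (0 * e S)"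
      by (simp only: e_mult e_diff e_pow e_X e_uminus eG ePhi)
    then have "0 = w^(s*p) * e A ^ p - w^(p-1) * (- e A)^p" by simp
    also have "\<dots> = e A ^ p * (w^(s*p) - (-1)^p * w^(p-1))"
      by (simp only: power_minus[of "e A"] right_diff_distrib mult_ac)
    finally have eq: "w^(s*p) = (-1)^p * w^(p-1)" using eA by simp
    show "p mod (2*n) = 2 mod (2*n)"
    proof (cases "even p")
      case False
      have "(w^(s*p))^n = ((-1)^p * w^(p-1))^n" using eq by simp
      moreover have "(w^(s*p))^n = 1" by (metis power_mult mult.commute wn power_one)
      moreover have "((-1)^p * w^(p-1))^n = ((-1)^(p*n) :: complex)"
        by (metis power_mult_distrib power_mult mult.commute wn power_one mult_1_right)
      ultimately have "(1::complex) = (-1)^(p*n)" by simp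
      moreover have "odd (p*n)" using False n_def by simp
      ultimately show ?thesis by simp
    next
      case True
      then obtain m where m: "p = 2*m" by auto
      have m1: "m \<ge> 1" using m assms by simp
      have ge: "s*p = (p-1) + (2*m*t+1)" using m m1 s by (simp add: algebra_simps)
      have "w^(p-1) * w^(2*m*t+1) = w^(p-1) * 1" using eq True ge by (simp add: power_add)
      then have "w^(2*m*t+1) = 1" using w0 by simp
      then have d: "n dvd 2*m*t+1" using wp[of "2*m*t+1"] by simp
      have "2*m*t+1 + (m-1) = m * n" using m1 n_def by (simp add: algebra_simps)
      then have "n dvd (2*m*t+1) + (m-1)" by simp
      then have "n dvd m - 1" using d by (metis dvd_add_right_iff)
      then obtain j where j: "m - 1 = n*j" by auto
      have "p = 2 + (2*n)*j" using j m m1 by simp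
      then show ?thesis by (simp only: mod_mult_self2)
    qed
  next
    assume hp: "p mod (2*n) = 2 mod (2*n)"
    have "2 mod (2*n) = (2::nat)" using n_def t1 by simp
    then have "p mod (2*n) = 2" using hp by simp
    then obtain k where pk: "p = 2 + (2*n)*k" using div_mult_mod_eq[of p "2*n"] by (metis add.commute mult.commute)
    have ev: "even p" using pk by simp
    define m where "m = 1 + 2*k*t"
    have sp: "s*p = (p-1) + n*m" unfolding pk m_def n_def s by (simp add: algebra_simps)
    obtain S where S: "X^(s*p) * G s p = X^(s*p) * A^p - X^(p-1) * (-A)^p - X^(p-1) * (Phi * S)"
      using key[of p] assms by auto
    have neg: "(-A)^p = A^p" using ev by simp
    have xs: "X^(s*p) = X^(p-1) * (X^n)^m" unfolding sp by (simp only: power_add power_mult)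
    have "X^(s*p) * G s p = X^(s*p) * A^p - X^(p-1) * A^p - X^(p-1) * (Phi * S)"
      using S neg by simp
    also have "\<dots> = X^(p-1) * A^p * ((X^n)^m - 1) - Phi * (X^(p-1) * S)"
      unfolding xs by (simp only: right_diff_distrib mult_ac mult_1_right mult_1_left)
    finally have "X^(s*p) * G s p = X^(p-1) * A^p * ((X^n)^m - 1) - Phi * (X^(p-1) * S)" .
    moreover have "Phi dvd (X^n)^m - 1"
    proof -
      have "(X^n)^m - 1 = (X^n - 1) * (\<Sum>i<m. (X^n)^i)" by (rule power_diff_1_eq)
      then show ?thesis using PhiXn by (metis dvd_mult2)
    qed
    ultimately have d1: "Phi dvd X^(s*p) * G s p" by (metis dvd_diff dvd_mult dvd_triv_left)
    have d2: "Phi dvd X^(n*(s*p)) - 1"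
    proof -
      have "(X^n)^(s*p) - 1 = (X^n - 1) * (\<Sum>i<s*p. (X^n)^i)" by (rule power_diff_1_eq)
      then show ?thesis using PhiXn by (metis dvd_mult2 power_mult)
    qed
    have "G s p = X^((n-1)*(s*p)) * (X^(s*p) * G s p) - (X^(n*(s*p)) - 1) * G s p"
    proof -
      have "(n-1)*(s*p) + s*p = n*(s*p)" using n_def by (simp add: algebra_simps)
      then have "X^((n-1)*(s*p)) * X^(s*p) = X^(n*(s*p))" by (metis power_add)
      then show ?thesis by (simp add: algebra_simps)
    qed
    also have "Phi dvd \<dots>" using d1 d2 by (simp add: dvd_diff)
    finally show "Phi dvd G s p" .
  qed
qed

end
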